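(* Let $n\ge 2K$, let $m_1,\dots,m_n$ be fixed constants, and let $M=\{(x_1,\dots,x_n)\in\mathbb{R}^n: x_1<x_2<\dots<x_n\}$ carry the Poisson bracket $\{f,g\}=\sum_{1\le i<j\le n}\operatorname{sgn}(x_i-x_j)\bigl(\frac{\partial f}{\partial x_i}\frac{\partial g}{\partial x_j}-\frac{\partial f}{\partial x_j}\frac{\partial g}{\partial x_i}\bigr)$, i.e. the bracket with $\{x_i,x_k\}=\operatorname{sgn}(x_i-x_k)$. Then for any subsets $I,J\subseteq\{1,\dots,K\}$, $$\Bigl\{\prod_{p\in I} m_{2p-1}m_{2p}e^{x_{2p-1}-x_{2p}},\ \prod_{q\in J} m_{2q-1}m_{2q}e^{x_{2q-1}-x_{2q}}\Bigr\}=0.$$ *)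

theory Defs
  imports "HOL-Analysis.Analysis"
begin

text \<open>Points of R^n are represented as functions nat => real, with coordinates
x 1, ..., x n (other coordinates are irrelevant). Functions on R^n are maps
(nat => real) => real.\<close>

definition partial :: "((nat \<Rightarrow> real) \<Rightarrow> real) \<Rightarrow> nat \<Rightarrow> (nat \<Rightarrow> real) \<Rightarrow> real" where
  "partial f i x = deriv (\<lambda>t. f (x(i := t))) (x i)"

definition phase_space :: "nat \<Rightarrow> (nat \<Rightarrow> real) set" where
  "phase_space n = {x. \<forall>i j. 1 \<le> i \<and> i < j \<and> j \<le> n \<longrightarrow> x i < x j}"

definition poisson :: "nat \<Rightarrow> ((nat \<Rightarrow> real) \<Rightarrow> real) \<Rightarrow> ((nat \<Rightarrow> real) \<Rightarrow> real)
    \<Rightarrow> (nat \<Rightarrow> real) \<Rightarrow> real" where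
  "poisson n f g x = (\<Sum>(i, j) \<in> {(i, j). 1 \<le> i \<and> i < j \<and> j \<le> n}.
      sgn (x i - x j) * (partial f i x * partial g j x - partial f j x * partial g i x))"

end

theory Submission
  imports Defs
begin

definition uu :: "nat \<Rightarrow> nat \<Rightarrow> real" where
  "uu p i = (if i = 2*p - 1 then 1 else 0) - (if i = 2*p then 1 else 0)"

lemma F_form:
  assumes "finite I"
  shows "(\<Prod>p\<in>I. m (2*p - 1) * m (2*p) * exp (y (2*p - 1) - y (2*p)))
       = (\<Prod>p\<in>I. m (2*p - 1) * m (2*p)) * exp (\<Sum>p\<in>I. y (2*p - 1) - y (2*p))"
  using assms by (simp add: prod.distrib exp_sum)

lemma L_upd:
  "(\<Sum>p\<in>I. (x(i:=t)) (2*p - 1) - (x(i:=t)) (2*p))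
     = (\<Sum>p\<in>I. x (2*p - 1) - x (2*p)) + (\<Sum>p\<in>I. uu p i) * (t - x i)"
proof -
  have "(\<Sum>p\<in>I. (x(i:=t)) (2*p - 1) - (x(i:=t)) (2*p))
     = (\<Sum>p\<in>I. (x (2*p - 1) - x (2*p)) + uu p i * (t - x i))"
    by (rule sum.cong) (auto simp: uu_def)
  also have "\<dots> = (\<Sum>p\<in>I. x (2*p - 1) - x (2*p)) + (\<Sum>p\<in>I. uu p i) * (t - x i)"
    by (simp add: sum.distrib sum_distrib_right)
  finally show ?thesis .
qed

lemma partial_F:
  assumes "finite I"
  shows "partial (\<lambda>y. \<Prod>p\<in>I. m (2*p - 1) * m (2*p) * exp (y (2*p - 1) - y (2*p))) i x
     = (\<Prod>p\<in>I. m (2*p - 1) * m (2*p) * exp (x (2*p - 1) - x (2*p))) * (\<Sum>p\<in>I. uu p i)"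
proof -
  define C where "C = (\<Prod>p\<in>I. m (2*p - 1) * m (2*p))"
  define L where "L = (\<Sum>p\<in>I. x (2*p - 1) - x (2*p))"
  define c where "c = (\<Sum>p\<in>I. uu p i)"
  have eq: "(\<lambda>t. \<Prod>p\<in>I. m (2*p - 1) * m (2*p) * exp ((x(i:=t)) (2*p - 1) - (x(i:=t)) (2*p)))
      = (\<lambda>t. C * exp (L + c * (t - x i)))"
    by (rule ext, subst F_form[OF assms], simp only: L_upd C_def L_def c_def)
  have "((\<lambda>t. C * exp (L + c * (t - x i))) has_real_derivative C * exp (L + c * (x i - x i)) * c) (at (x i))"
    by (auto intro!: derivative_eq_intros)
  hence "deriv (\<lambda>t. C * exp (L + c * (t - x i))) (x i) = C * exp L * c"
    by (simp add: DERIV_imp_deriv)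
  thus ?thesis unfolding partial_def eq
    using F_form[OF assms, of m x] by (simp add: C_def L_def c_def)
qed


definition dd :: "nat \<times> nat \<Rightarrow> nat \<times> nat \<Rightarrow> real" where
  "dd z w = (if z = w then 1 else 0)"

lemma dd_pair: "dd (i,j) (a,b) = (if i=a then 1 else 0) * (if j=b then 1 else 0)"
  by (simp add: dd_def)

lemma uu_mult: "uu p i * uu q j = dd (i,j) (2*p-1, 2*q-1) - dd (i,j) (2*p-1, 2*q)
   - dd (i,j) (2*p, 2*q-1) + dd (i,j) (2*p, 2*q)"
  unfolding uu_def dd_pair by (simp only: algebra_simps)

lemma dd_swap: "dd (b,a) (c,d) = dd (a,b) (d,c)"
  by (auto simp: dd_def)

lemma sum_dd:
  assumes "finite S" shows "(\<Sum>z\<in>S. dd z w) = (if w \<in> S then 1 else 0)"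
  using assms by (simp add: dd_def sum.delta')

definition SS :: "nat \<Rightarrow> (nat \<times> nat) set" where
  "SS n = {(i, j). 1 \<le> i \<and> i < j \<and> j \<le> n}"

lemma SS_finite: "finite (SS n)"
  by (rule finite_subset[of _ "{1..n} \<times> {1..n}"]) (auto simp: SS_def)

lemma SS_mem: "(a,b) \<in> SS n \<longleftrightarrow> 1 \<le> a \<and> a < b \<and> b \<le> n"
  by (simp add: SS_def)

lemma key:
  assumes "1 \<le> p" "p \<le> K" "1 \<le> q" "q \<le> K" "2*K \<le> n"
  shows "(\<Sum>(i,j)\<in>SS n. uu p i * uu q j - uu p j * uu q i) = 0"
proof -
  have "(\<Sum>(i,j)\<in>SS n. uu p i * uu q j - uu p j * uu q i)
     = (\<Sum>z\<in>SS n. dd z (2*p-1, 2*q-1) - dd z (2*p-1, 2*q)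
   - dd z (2*p, 2*q-1) + dd z (2*p, 2*q) - (dd z (2*q-1, 2*p-1) - dd z (2*q, 2*p-1)
   - dd z (2*q-1, 2*p) + dd z (2*q, 2*p)))"
    by (rule sum.cong) (simp_all add: uu_mult case_prod_unfold dd_swap)
  also have "\<dots> = 0"
    unfolding sum.distrib sum_subtractf sum_dd[OF SS_finite] SS_mem
    using assms by (cases "p < q"; cases "q < p") auto
  finally show ?thesis .
qed

theorem lemma2:
  fixes n K :: nat and m :: "nat \<Rightarrow> real" and I J :: "nat set"
  assumes "n \<ge> 2 * K"
    and "I \<subseteq> {1..K}" and "J \<subseteq> {1..K}"
  shows "\<forall>x \<in> phase_space n.
    poisson n (\<lambda>y. \<Prod>p\<in>I. m (2*p - 1) * m (2*p) * exp (y (2*p - 1) - y (2*p)))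
              (\<lambda>y. \<Prod>q\<in>J. m (2*q - 1) * m (2*q) * exp (y (2*q - 1) - y (2*q))) x = 0"
proof
  fix x assume x: "x \<in> phase_space n"
  have fI: "finite I" and fJ: "finite J" using assms finite_subset by blast+
  define F where "F = (\<Prod>p\<in>I. m (2*p - 1) * m (2*p) * exp (x (2*p - 1) - x (2*p)))"
  define G where "G = (\<Prod>q\<in>J. m (2*q - 1) * m (2*q) * exp (x (2*q - 1) - x (2*q)))"
  define a where "a i = (\<Sum>p\<in>I. uu p i)" for i
  define b where "b i = (\<Sum>q\<in>J. uu q i)" for i
  have "poisson n (\<lambda>y. \<Prod>p\<in>I. m (2*p - 1) * m (2*p) * exp (y (2*p - 1) - y (2*p)))
              (\<lambda>y. \<Prod>q\<in>J. m (2*q - 1) * m (2*q) * exp (y (2*q - 1) - y (2*q))) x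
     = (\<Sum>(i,j)\<in>SS n. - (F * G) * (a i * b j - a j * b i))"
    unfolding poisson_def SS_def[symmetric]
  proof (rule sum.cong)
    fix z assume z: "z \<in> SS n"
    obtain i j where ij: "z = (i,j)" by force
    have "x i < x j" using x z ij by (auto simp: phase_space_def SS_def)
    thus "(case z of (i, j) \<Rightarrow> sgn (x i - x j) *
          (partial (\<lambda>y. \<Prod>p\<in>I. m (2*p - 1) * m (2*p) * exp (y (2*p - 1) - y (2*p))) i x *
           partial (\<lambda>y. \<Prod>q\<in>J. m (2*q - 1) * m (2*q) * exp (y (2*q - 1) - y (2*q))) j x -
           partial (\<lambda>y. \<Prod>p\<in>I. m (2*p - 1) * m (2*p) * exp (y (2*p - 1) - y (2*p))) j x *
           partial (\<lambda>y. \<Prod>q\<in>J. m (2*q - 1) * m (2*q) * exp (y (2*q - 1) - y (2*q))) i x)) =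
         (case z of (i, j) \<Rightarrow> - (F * G) * (a i * b j - a j * b i))"
      unfolding ij partial_F[OF fI] partial_F[OF fJ]
      by (simp add: F_def G_def a_def b_def algebra_simps)
  qed simp
  also have "\<dots> = - (F * G) * (\<Sum>(i,j)\<in>SS n. a i * b j - a j * b i)"
    by (simp add: sum_distrib_left case_prod_unfold)
  also have "(\<Sum>(i,j)\<in>SS n. a i * b j - a j * b i)
      = (\<Sum>(i,j)\<in>SS n. \<Sum>p\<in>I. \<Sum>q\<in>J. uu p i * uu q j - uu p j * uu q i)"
    by (simp add: a_def b_def sum_distrib_left sum_distrib_right sum_subtractf
        case_prod_unfold) (subst (1 2) sum.swap[of _ J], rule refl)
  also have "\<dots> = (\<Sum>p\<in>I. \<Sum>q\<in>J. \<Sum>(i,j)\<in>SS n. uu p i * uu q j - uu p j * uu q i)"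
    by (simp add: sum.swap[of _ "SS n"] case_prod_unfold)
  also have "\<dots> = 0"
    apply (rule sum.neutral, rule ballI, rule sum.neutral, rule ballI)
    apply (rule key[of _ K _ n])
    using assms by auto
  finally show "poisson n (\<lambda>y. \<Prod>p\<in>I. m (2*p - 1) * m (2*p) * exp (y (2*p - 1) - y (2*p)))
              (\<lambda>y. \<Prod>q\<in>J. m (2*q - 1) * m (2*q) * exp (y (2*q - 1) - y (2*q))) x = 0"
    by simp
qed

end
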